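(* Let $X$ be a finite connected poset, $F$ a field and $\varphi$ a Jordan automorphism of $I(X,F)$ such that $\varphi(e_x)=e_{\lambda(x)}$ for all $x\in X$, for some bijection $\lambda:X\to X$. Then $\lambda$ is either an order automorphism or an order anti-automorphism of $X$.
   Context: $I(X,F)$ is the incidence algebra of the locally finite poset $X$ over $F$ (functions $f:X\times X\to F$ vanishing unless $x\le y$, with product $(fg)(x,y)=\sum_{x\le z\le y}f(x,z)g(z,y)$). For $x\le y$, $e_{xy}$ is the function equal to $1$ at $(x,y)$ and $0$ elsewhere, and $e_x:=e_{xx}$. A poset is connected if any two elements are joined by a finite sequence of elements in which consecutive elements are comparable. A Jordan automorphism of an associative algebra $A$ is a bijective linear map $\varphi:A\to A$ with $\varphi(a^2)=\varphi(a)^2$ and $\varphi(aba)=\varphi(a)\varphi(b)\varphi(a)$ for all $a,b\in A$. An order automorphism (resp. anti-automorphism) of $X$ is a bijection $\lambda$ such that $\lambda$ and $\lambda^{-1}$ are order-preserving (resp. order-reversing). *)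

theory Defs
  imports Main
begin

definition poset_on :: "'a set \<Rightarrow> ('a \<Rightarrow> 'a \<Rightarrow> bool) \<Rightarrow> bool" where
  "poset_on X le \<longleftrightarrow>
     (\<forall>x\<in>X. le x x) \<and>
     (\<forall>x\<in>X. \<forall>y\<in>X. le x y \<and> le y x \<longrightarrow> x = y) \<and>
     (\<forall>x\<in>X. \<forall>y\<in>X. \<forall>z\<in>X. le x y \<and> le y z \<longrightarrow> le x z)"

definition connected_poset :: "'a set \<Rightarrow> ('a \<Rightarrow> 'a \<Rightarrow> bool) \<Rightarrow> bool" where
  "connected_poset X le \<longleftrightarrow>
     (\<forall>x\<in>X. \<forall>y\<in>X. \<exists>xs. xs \<noteq> [] \<and> hd xs = x \<and> last xs = y \<and> set xs \<subseteq> X \<and>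
        (\<forall>i. Suc i < length xs \<longrightarrow> le (xs ! i) (xs ! Suc i) \<or> le (xs ! Suc i) (xs ! i)))"

text \<open>The incidence algebra I(X,F): functions X \<times> X \<rightarrow> F vanishing unless x \<le> y
(represented as functions on the whole type, zero outside X \<times> X).\<close>
definition incidence :: "'a set \<Rightarrow> ('a \<Rightarrow> 'a \<Rightarrow> bool) \<Rightarrow> ('a \<Rightarrow> 'a \<Rightarrow> 'f::field) set" where
  "incidence X le = {f. \<forall>x y. \<not> (x \<in> X \<and> y \<in> X \<and> le x y) \<longrightarrow> f x y = 0}"

definition inc_mult :: "'a set \<Rightarrow> ('a \<Rightarrow> 'a \<Rightarrow> bool) \<Rightarrow> ('a \<Rightarrow> 'a \<Rightarrow> 'f::field)
    \<Rightarrow> ('a \<Rightarrow> 'a \<Rightarrow> 'f) \<Rightarrow> ('a \<Rightarrow> 'a \<Rightarrow> 'f)" where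
  "inc_mult X le f g = (\<lambda>x y. if x \<in> X \<and> y \<in> X \<and> le x y
      then (\<Sum>z\<in>{z\<in>X. le x z \<and> le z y}. f x z * g z y) else 0)"

definition e_unit :: "'a \<Rightarrow> 'a \<Rightarrow> ('a \<Rightarrow> 'a \<Rightarrow> 'f::field)" where
  "e_unit x y = (\<lambda>u v. if u = x \<and> v = y then 1 else 0)"

definition jordan_automorphism :: "'a set \<Rightarrow> ('a \<Rightarrow> 'a \<Rightarrow> bool)
    \<Rightarrow> (('a \<Rightarrow> 'a \<Rightarrow> 'f::field) \<Rightarrow> ('a \<Rightarrow> 'a \<Rightarrow> 'f)) \<Rightarrow> bool" where
  "jordan_automorphism X le \<phi> \<longleftrightarrow>
     bij_betw \<phi> (incidence X le) (incidence X le) \<and>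
     (\<forall>f\<in>incidence X le. \<forall>g\<in>incidence X le. \<phi> (\<lambda>x y. f x y + g x y) = (\<lambda>x y. \<phi> f x y + \<phi> g x y)) \<and>
     (\<forall>c. \<forall>f\<in>incidence X le. \<phi> (\<lambda>x y. c * f x y) = (\<lambda>x y. c * \<phi> f x y)) \<and>
     (\<forall>a\<in>incidence X le. \<phi> (inc_mult X le a a) = inc_mult X le (\<phi> a) (\<phi> a)) \<and>
     (\<forall>a\<in>incidence X le. \<forall>b\<in>incidence X le.
        \<phi> (inc_mult X le (inc_mult X le a b) a)
          = inc_mult X le (inc_mult X le (\<phi> a) (\<phi> b)) (\<phi> a))"

definition order_automorphism :: "'a set \<Rightarrow> ('a \<Rightarrow> 'a \<Rightarrow> bool) \<Rightarrow> ('a \<Rightarrow> 'a) \<Rightarrow> bool" where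
  "order_automorphism X le lam \<longleftrightarrow> bij_betw lam X X \<and>
     (\<forall>x\<in>X. \<forall>y\<in>X. le x y \<longrightarrow> le (lam x) (lam y)) \<and>
     (\<forall>x\<in>X. \<forall>y\<in>X. le x y \<longrightarrow> le (the_inv_into X lam x) (the_inv_into X lam y))"

definition order_anti_automorphism :: "'a set \<Rightarrow> ('a \<Rightarrow> 'a \<Rightarrow> bool) \<Rightarrow> ('a \<Rightarrow> 'a) \<Rightarrow> bool" where
  "order_anti_automorphism X le lam \<longleftrightarrow> bij_betw lam X X \<and>
     (\<forall>x\<in>X. \<forall>y\<in>X. le x y \<longrightarrow> le (lam y) (lam x)) \<and>
     (\<forall>x\<in>X. \<forall>y\<in>X. le x y \<longrightarrow> le (the_inv_into X lam y) (the_inv_into X lam x))"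

end

theory Submission
  imports Defs
begin


definition jp where "jp X le a b = (\<lambda>p q. inc_mult X le a b p q + inc_mult X le b a p q)"

lemma inc_mult_in: "inc_mult X le f g \<in> incidence X le"
  by (simp add: incidence_def inc_mult_def)

lemma add_in: "f \<in> incidence X le \<Longrightarrow> g \<in> incidence X le \<Longrightarrow> (\<lambda>x y. f x y + g x y) \<in> incidence X le"
  by (simp add: incidence_def)

lemma jp_in: "jp X le f g \<in> incidence X le"
  by (simp add: incidence_def inc_mult_def jp_def)

lemma inc_mult_add_left: "inc_mult X le (\<lambda>x y. f x y + g x y) h = (\<lambda>x y. inc_mult X le f h x y + inc_mult X le g h x y)"
  by (auto simp: inc_mult_def fun_eq_iff sum.distrib distrib_right)

lemma inc_mult_add_right: "inc_mult X le h (\<lambda>x y. f x y + g x y) = (\<lambda>x y. inc_mult X le h f x y + inc_mult X le h g x y)"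
  by (auto simp: inc_mult_def fun_eq_iff sum.distrib distrib_left)

lemma e_in: "x\<in>X \<Longrightarrow> y\<in>X \<Longrightarrow> le x y \<Longrightarrow> e_unit x y \<in> incidence X le"
  by (auto simp: incidence_def e_unit_def)

lemma mult_e_left:
  assumes "finite X" "u\<in>X" "le u u" "A \<in> incidence X le"
  shows "inc_mult X le (e_unit u u) A = (\<lambda>p q. if p = u then A p q else 0)"
proof (rule ext, rule ext)
  fix p q
  have s: "(\<Sum>z\<in>{z\<in>X. le p z \<and> le z q}. e_unit u u p z * A z q)
      = (\<Sum>z\<in>{z\<in>X. le p z \<and> le z q}. if z = u then (if p = u then A u q else 0) else 0)"
    by (rule sum.cong) (auto simp: e_unit_def)
  show "inc_mult X le (e_unit u u) A p q = (if p = u then A p q else 0)"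
    apply (simp only: inc_mult_def s) using assms by (auto simp: incidence_def)
qed

lemma mult_e_right:
  assumes "finite X" "u\<in>X" "le u u" "A \<in> incidence X le"
  shows "inc_mult X le A (e_unit u u) = (\<lambda>p q. if q = u then A p q else 0)"
proof (rule ext, rule ext)
  fix p q
  have s: "(\<Sum>z\<in>{z\<in>X. le p z \<and> le z q}. A p z * e_unit u u z q)
      = (\<Sum>z\<in>{z\<in>X. le p z \<and> le z q}. if z = u then (if q = u then A p u else 0) else 0)"
    by (rule sum.cong) (auto simp: e_unit_def)
  show "inc_mult X le A (e_unit u u) p q = (if q = u then A p q else 0)"
    apply (simp only: inc_mult_def s) using assms by (auto simp: incidence_def)
qed

lemma e_mult:
  assumes "finite X" "poset_on X le" "a\<in>X" "b\<in>X" "c\<in>X" "d\<in>X" "le a b" "le c d"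
  shows "inc_mult X le (e_unit a b) (e_unit c d) = (if b = c then e_unit a d else (\<lambda>_ _. 0))"
proof (rule ext, rule ext)
  fix p q
  have s: "(\<Sum>z\<in>{z\<in>X. le p z \<and> le z q}. e_unit a b p z * e_unit c d z q)
      = (\<Sum>z\<in>{z\<in>X. le p z \<and> le z q}. if z = b then (if p = a \<and> b = c \<and> q = d then 1 else 0) else 0)"
    by (rule sum.cong) (auto simp: e_unit_def)
  have tr: "le a d" if "b = c" using assms that unfolding poset_on_def by blast
  show "inc_mult X le (e_unit a b) (e_unit c d) p q = (if b = c then e_unit a d else (\<lambda>_ _. 0)) p q"
    apply (simp only: inc_mult_def s) using assms tr by (auto simp: e_unit_def)
qed

lemma mult_zero:
  assumes "\<forall>p q. B p q \<noteq> 0 \<longrightarrow> p = a \<and> q = b" "\<forall>p q. C p q \<noteq> 0 \<longrightarrow> p = c \<and> q = d" "b \<noteq> c"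
  shows "inc_mult X le B C = (\<lambda>_ _. 0)"
proof (rule ext, rule ext)
  fix p q
  have "(\<Sum>z\<in>{z\<in>X. le p z \<and> le z q}. B p z * C z q) = 0"
    apply (rule sum.neutral) using assms by (metis mult_eq_0_iff)
  then show "inc_mult X le B C p q = 0" by (simp add: inc_mult_def)
qed



lemma aux: fixes a :: "'f::field" assumes h: "a = (if P then a else 0) + (if Q then a else 0)" and nz: "a \<noteq> 0"
  shows "(P \<or> Q) \<and> \<not> (P \<and> Q)"
proof (cases P; cases Q)
  assume "P" "Q" then have "a = a + a" using h by metis
  then have "a = 0" by (metis add_cancel_left_right)
  with nz show ?thesis by blast
next
  assume "\<not>P" "\<not>Q" then have "a = 0 + 0" using h by metis
  with nz show ?thesis by simp
qed auto

lemma sq_expand: "inc_mult X le (\<lambda>x y. a x y + b x y) (\<lambda>x y. a x y + b x y)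
   = (\<lambda>x y. (\<lambda>x y. inc_mult X le a a x y + inc_mult X le b b x y) x y + jp X le a b x y)"
  unfolding inc_mult_add_left inc_mult_add_right jp_def by (simp add: fun_eq_iff add_ac)

locale JA =
  fixes X :: "'a set" and le :: "'a \<Rightarrow> 'a \<Rightarrow> bool"
    and \<phi> :: "('a \<Rightarrow> 'a \<Rightarrow> 'f::field) \<Rightarrow> ('a \<Rightarrow> 'a \<Rightarrow> 'f)"
    and lam :: "'a \<Rightarrow> 'a"
  assumes fin: "finite X" and pos: "poset_on X le"
    and ja: "jordan_automorphism X le \<phi>"
    and bij: "bij_betw lam X X"
    and eu: "\<forall>x\<in>X. \<phi> (e_unit x x) = e_unit (lam x) (lam x)"
begin

lemma refl: "x \<in> X \<Longrightarrow> le x x" using pos by (simp add: poset_on_def)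
lemma antisym: "x \<in> X \<Longrightarrow> y \<in> X \<Longrightarrow> le x y \<Longrightarrow> le y x \<Longrightarrow> x = y" using pos unfolding poset_on_def by blast
lemma trans: "x \<in> X \<Longrightarrow> y \<in> X \<Longrightarrow> z \<in> X \<Longrightarrow> le x y \<Longrightarrow> le y z \<Longrightarrow> le x z" using pos unfolding poset_on_def by blast
lemma lamX: "x \<in> X \<Longrightarrow> lam x \<in> X" using bij by (auto simp: bij_betw_def) 
lemma laminj: "x \<in> X \<Longrightarrow> y \<in> X \<Longrightarrow> lam x = lam y \<Longrightarrow> x = y" using bij by (simp add: bij_betw_def inj_on_def)

lemma phi_add: "f \<in> incidence X le \<Longrightarrow> g \<in> incidence X le \<Longrightarrow> \<phi> (\<lambda>x y. f x y + g x y) = (\<lambda>x y. \<phi> f x y + \<phi> g x y)"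
  using ja by (simp add: jordan_automorphism_def)
lemma phi_sq: "a \<in> incidence X le \<Longrightarrow> \<phi> (inc_mult X le a a) = inc_mult X le (\<phi> a) (\<phi> a)"
  using ja by (simp add: jordan_automorphism_def)
lemma phi_in: "f \<in> incidence X le \<Longrightarrow> \<phi> f \<in> incidence X le"
  using ja by (auto simp: jordan_automorphism_def bij_betw_def)
lemma zero_in: "(\<lambda>_ _. 0) \<in> incidence X le" by (simp add: incidence_def)
lemma phi_zero: "\<phi> (\<lambda>_ _. 0) = (\<lambda>_ _. 0)"
proof -
  have h: "\<forall>c. \<forall>f\<in>incidence X le. \<phi> (\<lambda>x y. c * f x y) = (\<lambda>x y. c * \<phi> f x y)"
    using ja by (simp add: jordan_automorphism_def)
  show ?thesis using bspec[OF spec[OF h, of 0] zero_in] by simp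
qed
lemma phi_nz: "f \<in> incidence X le \<Longrightarrow> f \<noteq> (\<lambda>_ _. 0) \<Longrightarrow> \<phi> f \<noteq> (\<lambda>_ _. 0)"
proof
  assume f: "f \<in> incidence X le" and nz: "f \<noteq> (\<lambda>_ _. 0)" and e: "\<phi> f = (\<lambda>_ _. 0)"
  have inj: "inj_on \<phi> (incidence X le)" using ja by (simp add: jordan_automorphism_def bij_betw_def)
  have "\<phi> f = \<phi> (\<lambda>_ _. 0)" using e phi_zero by simp
  then have "f = (\<lambda>_ _. 0)" using inj_onD[OF inj _ f zero_in] by blast
  with nz show False by simp
qed

lemma phi_jp:
  assumes a: "a \<in> incidence X le" and b: "b \<in> incidence X le"
  shows "\<phi> (jp X le a b) = jp X le (\<phi> a) (\<phi> b)"
proof -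
  define s where "s = (\<lambda>x y. a x y + b x y)"
  have sin: "s \<in> incidence X le" using add_in[OF a b] by (simp add: s_def)
  have e1: "inc_mult X le s s = (\<lambda>x y. (\<lambda>x y. inc_mult X le a a x y + inc_mult X le b b x y) x y + jp X le a b x y)"
    unfolding s_def by (rule sq_expand)
  have L: "\<phi> (inc_mult X le s s) = (\<lambda>x y. (\<phi> (inc_mult X le a a) x y + \<phi> (inc_mult X le b b) x y) + \<phi> (jp X le a b) x y)"
    unfolding e1 by (simp add: phi_add add_in inc_mult_in jp_in)
  have ps: "\<phi> s = (\<lambda>x y. \<phi> a x y + \<phi> b x y)" unfolding s_def using phi_add[OF a b] .
  have R: "\<phi> (inc_mult X le s s) = (\<lambda>x y. (\<lambda>x y. inc_mult X le (\<phi> a) (\<phi> a) x y + inc_mult X le (\<phi> b) (\<phi> b) x y) x y + jp X le (\<phi> a) (\<phi> b) x y)"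
    unfolding phi_sq[OF sin] ps by (rule sq_expand)
  have "\<And>x y. \<phi> (jp X le a b) x y = jp X le (\<phi> a) (\<phi> b) x y"
  proof -
    fix x y
    have "(\<phi> (inc_mult X le a a) x y + \<phi> (inc_mult X le b b) x y) + \<phi> (jp X le a b) x y
       = (inc_mult X le (\<phi> a) (\<phi> a) x y + inc_mult X le (\<phi> b) (\<phi> b) x y) + jp X le (\<phi> a) (\<phi> b) x y"
      using fun_cong[OF fun_cong[OF HOL.trans[OF L[symmetric] R], of x], of y] by simp
    then show "\<phi> (jp X le a b) x y = jp X le (\<phi> a) (\<phi> b) x y"
      unfolding phi_sq[OF a] phi_sq[OF b] by (rule add_left_imp_eq)
  qed
  then show ?thesis by (intro ext)
qed

lemma e_in': "x\<in>X \<Longrightarrow> y\<in>X \<Longrightarrow> le x y \<Longrightarrow> e_unit x y \<in> incidence X le"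
  by (rule e_in)

abbreviation lt where "lt x y \<equiv> le x y \<and> x \<noteq> y"

lemma supp:
  assumes x: "x \<in> X" and y: "y \<in> X" and xy: "lt x y"
  shows "\<forall>p q. \<phi> (e_unit x y) p q \<noteq> 0 \<longrightarrow> (p = lam x \<and> q = lam y) \<or> (p = lam y \<and> q = lam x)"
proof -
  define A where "A = \<phi> (e_unit x y)"
  have exy: "e_unit x y \<in> incidence X le" using e_in x y xy by metis
  have Ain: "A \<in> incidence X le" using phi_in[OF exy] by (simp add: A_def)
  have xy': "y \<noteq> x" using xy by auto
  have m1: "inc_mult X le (e_unit x x) (e_unit x y) = (e_unit x y :: 'a \<Rightarrow> 'a \<Rightarrow> 'f)"
    using e_mult[OF fin pos x x x y refl[OF x] conjunct1[OF xy]] by simp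
  have m2: "inc_mult X le (e_unit x y) (e_unit x x) = (\<lambda>_ _. 0 :: 'f)"
    using e_mult[OF fin pos x y x x conjunct1[OF xy] refl[OF x]] xy' by simp
  have m3: "inc_mult X le (e_unit y y) (e_unit x y) = (\<lambda>_ _. 0 :: 'f)"
    using e_mult[OF fin pos y y x y refl[OF y] conjunct1[OF xy]] xy' by simp
  have m4: "inc_mult X le (e_unit x y) (e_unit y y) = (e_unit x y :: 'a \<Rightarrow> 'a \<Rightarrow> 'f)"
    using e_mult[OF fin pos x y y y conjunct1[OF xy] refl[OF y]] by simp
  have j1: "jp X le (e_unit x x) (e_unit x y) = (e_unit x y :: 'a \<Rightarrow> 'a \<Rightarrow> 'f)"
    by (simp add: jp_def m1 m2)
  have j2: "jp X le (e_unit y y) (e_unit x y) = (e_unit x y :: 'a \<Rightarrow> 'a \<Rightarrow> 'f)"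
    by (simp add: jp_def m3 m4)
  have A1: "A = (\<lambda>p q. (if p = lam x then A p q else 0) + (if q = lam x then A p q else 0))"
  proof -
    have "A = \<phi> (jp X le (e_unit x x) (e_unit x y))" using j1 by (simp add: A_def)
    also have "\<dots> = jp X le (e_unit (lam x) (lam x)) A"
      using phi_jp[OF e_in'[OF x x refl[OF x]] exy] eu x by (simp add: A_def)
    also have "\<dots> = (\<lambda>p q. (if p = lam x then A p q else 0) + (if q = lam x then A p q else 0))"
      unfolding jp_def mult_e_left[OF fin lamX[OF x] refl[OF lamX[OF x]] Ain] mult_e_right[OF fin lamX[OF x] refl[OF lamX[OF x]] Ain]
      by simp
    finally show ?thesis .
  qed
  have A2: "A = (\<lambda>p q. (if p = lam y then A p q else 0) + (if q = lam y then A p q else 0))"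
  proof -
    have "A = \<phi> (jp X le (e_unit y y) (e_unit x y))" using j2 by (simp add: A_def)
    also have "\<dots> = jp X le (e_unit (lam y) (lam y)) A"
      using phi_jp[OF e_in'[OF y y refl[OF y]] exy] eu y by (simp add: A_def)
    also have "\<dots> = (\<lambda>p q. (if p = lam y then A p q else 0) + (if q = lam y then A p q else 0))"
      unfolding jp_def mult_e_left[OF fin lamX[OF y] refl[OF lamX[OF y]] Ain] mult_e_right[OF fin lamX[OF y] refl[OF lamX[OF y]] Ain]
      by simp
    finally show ?thesis .
  qed
  have ne: "lam x \<noteq> lam y" using laminj[OF x y] xy by auto
  show ?thesis unfolding A_def[symmetric]
  proof (intro allI impI)
    fix p q assume nz: "A p q \<noteq> 0"
    have a1: "A p q = (if p = lam x then A p q else 0) + (if q = lam x then A p q else 0)"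
      by (rule fun_cong[OF fun_cong[OF A1, of p], of q])
    have a2: "A p q = (if p = lam y then A p q else 0) + (if q = lam y then A p q else 0)"
      by (rule fun_cong[OF fun_cong[OF A2, of p], of q])
    from aux[OF a1 nz] aux[OF a2 nz] ne show "(p = lam x \<and> q = lam y) \<or> (p = lam y \<and> q = lam x)"
      by auto
  qed
qed

lemma e_nz: "e_unit x y \<noteq> (\<lambda>_ _. (0::'f))"
proof
  assume "e_unit x y = (\<lambda>_ _. (0::'f))"
  then have "e_unit x y x y = (0::'f)" by simp
  then show False by (simp add: e_unit_def)
qed

lemma comp:
  assumes x: "x \<in> X" and y: "y \<in> X" and xy: "lt x y"
  shows "lt (lam x) (lam y) \<or> lt (lam y) (lam x)"
proof -
  have exy: "e_unit x y \<in> incidence X le" using e_in x y xy by metis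
  have "\<exists>p q. \<phi> (e_unit x y) p q \<noteq> 0"
  proof (rule ccontr)
    assume "\<not> (\<exists>p q. \<phi> (e_unit x y) p q \<noteq> 0)"
    then have "\<phi> (e_unit x y) = (\<lambda>_ _. 0)" by (intro ext) blast
    with phi_nz[OF exy e_nz] show False by blast
  qed
  then obtain p q where nz: "\<phi> (e_unit x y) p q \<noteq> 0" by blast
  have lpq: "le p q" using phi_in[OF exy] nz by (auto simp: incidence_def)
  have ne: "lam x \<noteq> lam y" using laminj[OF x y] xy by auto
  have "(p = lam x \<and> q = lam y) \<or> (p = lam y \<and> q = lam x)" using supp[OF x y xy] nz by blast
  then show ?thesis using lpq ne by auto
qed


lemma ltrans: "a \<in> X \<Longrightarrow> b \<in> X \<Longrightarrow> c \<in> X \<Longrightarrow> lt a b \<Longrightarrow> lt b c \<Longrightarrow> lt a c"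
  using trans antisym by blast

lemma lasym: "a \<in> X \<Longrightarrow> b \<in> X \<Longrightarrow> lt a b \<Longrightarrow> lt b a \<Longrightarrow> False"
  using antisym by blast

lemma refl_comp:
  assumes x: "x \<in> X" and y: "y \<in> X" and l: "lt (lam x) (lam y)"
  shows "lt x y \<or> lt y x"
proof -
  define S where "S = {(a,b). a \<in> X \<and> b \<in> X \<and> a \<noteq> b \<and> (le a b \<or> le b a)}"
  define f where "f = (\<lambda>(a,b). (lam a, lam b))"
  have finS: "finite S"
    by (rule finite_subset[of _ "X \<times> X"]) (auto simp: S_def fin)
  have sub: "f ` S \<subseteq> S"
  proof
    fix w assume "w \<in> f ` S"
    then obtain a b where ab: "(a,b) \<in> S" "w = (lam a, lam b)" by (auto simp: f_def)
    then have a: "a \<in> X" and b: "b \<in> X" and ne: "a \<noteq> b" and c: "le a b \<or> le b a" by (auto simp: S_def)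
    have "lt (lam a) (lam b) \<or> lt (lam b) (lam a)"
    proof (cases "le a b")
      case True then show ?thesis using comp[OF a b] ne by blast
    next
      case False then have "le b a" using c by blast
      then show ?thesis using comp[OF b a] ne by blast
    qed
    then show "w \<in> S" using ab(2) lamX[OF a] lamX[OF b] by (auto simp: S_def)
  qed
  have inj: "inj_on f S"
    by (rule inj_onI) (auto simp: f_def S_def dest: laminj)
  have eq: "f ` S = S" by (rule endo_inj_surj[OF finS sub inj])
  have "(lam x, lam y) \<in> S" using l lamX[OF x] lamX[OF y] by (auto simp: S_def)
  then have "(lam x, lam y) \<in> f ` S" using eq by simp
  then obtain w where w: "w \<in> S" "(lam x, lam y) = f w" by blast
  obtain a b where wab: "w = (a, b)" by (cases w)
  have ab: "(a,b) \<in> S" "(lam x, lam y) = (lam a, lam b)" using w wab by (auto simp: f_def)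
  then have "a \<in> X" "b \<in> X" by (auto simp: S_def)
  then have "a = x" "b = y" using ab(2) laminj x y by auto
  then show ?thesis using ab(1) by (auto simp: S_def)
qed

lemma supp_dir:
  assumes x: "x \<in> X" and y: "y \<in> X" and xy: "lt x y" and uv: "lt u v"
    and o: "(u = lam x \<and> v = lam y) \<or> (u = lam y \<and> v = lam x)"
  shows "\<forall>p q. \<phi> (e_unit x y) p q \<noteq> 0 \<longrightarrow> p = u \<and> q = v"
proof (intro allI impI)
  fix p q assume nz: "\<phi> (e_unit x y) p q \<noteq> 0"
  have exy: "e_unit x y \<in> incidence X le" using e_in' x y xy by blast
  have lpq: "le p q" using phi_in[OF exy] nz by (auto simp: incidence_def)
  have c: "(p = lam x \<and> q = lam y) \<or> (p = lam y \<and> q = lam x)" using supp[OF x y xy] nz by blast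
  have uX: "u \<in> X" "v \<in> X" using o lamX x y by auto
  show "p = u \<and> q = v"
  proof (rule ccontr)
    assume "\<not> (p = u \<and> q = v)"
    then have "p = v \<and> q = u" using c o by auto
    then have "le v u" using lpq by simp
    then show False using antisym[OF uX] uv by blast
  qed
qed

lemma middle:
  assumes x: "x \<in> X" and y: "y \<in> X" and z: "z \<in> X" and xy: "lt x y" and yz: "lt y z"
  shows "\<not> (lt (lam x) (lam y) \<and> lt (lam z) (lam y)) \<and> \<not> (lt (lam y) (lam x) \<and> lt (lam y) (lam z))"
proof -
  have xz: "lt x z" using ltrans[OF x y z xy yz] .
  have exy: "e_unit x y \<in> incidence X le" using e_in' x y xy by blast
  have eyz: "e_unit y z \<in> incidence X le" using e_in' y z yz by blast
  have exz: "e_unit x z \<in> incidence X le" using e_in' x z xz by blast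
  have zx: "z \<noteq> x" using xz by auto
  have m1: "inc_mult X le (e_unit x y) (e_unit y z) = (e_unit x z :: 'a \<Rightarrow> 'a \<Rightarrow> 'f)"
    using e_mult[OF fin pos x y y z conjunct1[OF xy] conjunct1[OF yz]] by simp
  have m2: "inc_mult X le (e_unit y z) (e_unit x y) = (\<lambda>_ _. 0 :: 'f)"
    using e_mult[OF fin pos y z x y conjunct1[OF yz] conjunct1[OF xy]] zx by simp
  have j: "jp X le (e_unit x y) (e_unit y z) = (e_unit x z :: 'a \<Rightarrow> 'a \<Rightarrow> 'f)"
    by (simp add: jp_def m1 m2)
  have key: "\<phi> (e_unit x z) = jp X le (\<phi> (e_unit x y)) (\<phi> (e_unit y z))"
    using phi_jp[OF exy eyz] j by simp
  have nzz: "\<phi> (e_unit x z) \<noteq> (\<lambda>_ _. 0)" using phi_nz[OF exz e_nz] .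
  have lxy: "lam x \<noteq> lam y" "lam y \<noteq> lam z" using laminj x y z xy yz by blast+
  show ?thesis
  proof (intro conjI notI)
    assume h: "lt (lam x) (lam y) \<and> lt (lam z) (lam y)"
    have B: "\<forall>p q. \<phi> (e_unit x y) p q \<noteq> 0 \<longrightarrow> p = lam x \<and> q = lam y"
      using supp_dir[OF x y xy] h by blast
    have C: "\<forall>p q. \<phi> (e_unit y z) p q \<noteq> 0 \<longrightarrow> p = lam z \<and> q = lam y"
      using supp_dir[OF y z yz] h by blast
    have "inc_mult X le (\<phi> (e_unit x y)) (\<phi> (e_unit y z)) = (\<lambda>_ _. 0)"
      by (rule mult_zero[OF B C]) (use lxy in auto)
    moreover have "inc_mult X le (\<phi> (e_unit y z)) (\<phi> (e_unit x y)) = (\<lambda>_ _. 0)"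
      by (rule mult_zero[OF C B]) (use lxy in auto)
    ultimately have "\<phi> (e_unit x z) = (\<lambda>_ _. 0)" using key by (simp add: jp_def)
    with nzz show False by blast
  next
    assume h: "lt (lam y) (lam x) \<and> lt (lam y) (lam z)"
    have B: "\<forall>p q. \<phi> (e_unit x y) p q \<noteq> 0 \<longrightarrow> p = lam y \<and> q = lam x"
      using supp_dir[OF x y xy] h by blast
    have C: "\<forall>p q. \<phi> (e_unit y z) p q \<noteq> 0 \<longrightarrow> p = lam y \<and> q = lam z"
      using supp_dir[OF y z yz] h by blast
    have "inc_mult X le (\<phi> (e_unit x y)) (\<phi> (e_unit y z)) = (\<lambda>_ _. 0)"
      by (rule mult_zero[OF B C]) (use lxy in auto)
    moreover have "inc_mult X le (\<phi> (e_unit y z)) (\<phi> (e_unit x y)) = (\<lambda>_ _. 0)"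
      by (rule mult_zero[OF C B]) (use lxy in auto)
    ultimately have "\<phi> (e_unit x z) = (\<lambda>_ _. 0)" using key by (simp add: jp_def)
    with nzz show False by blast
  qed
qed


lemma dich: "x \<in> X \<Longrightarrow> y \<in> X \<Longrightarrow> lt x y \<Longrightarrow> lt (lam x) (lam y) \<longleftrightarrow> \<not> lt (lam y) (lam x)"
  using comp lasym lamX by blast

lemma mid_iff:
  assumes x: "x \<in> X" and y: "y \<in> X" and z: "z \<in> X" and xy: "lt x y" and yz: "lt y z"
  shows "lt (lam x) (lam y) \<longleftrightarrow> lt (lam y) (lam z)"
  using middle[OF x y z xy yz] dich[OF x y xy] dich[OF y z yz] by blast

lemma min1:
  assumes x: "x \<in> X" and y: "y \<in> X" and z: "z \<in> X" and xy: "lt x y" and xz: "lt x z"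
    and o1: "lt (lam x) (lam y)" and o2: "\<not> lt (lam x) (lam z)"
  shows False
proof -
  have zx: "lt (lam z) (lam x)" using dich[OF x z xz] o2 by blast
  have zy: "lt (lam z) (lam y)" using ltrans[OF lamX[OF z] lamX[OF x] lamX[OF y] zx o1] .
  from refl_comp[OF z y zy] show False
  proof
    assume "lt z y"
    then have "lt (lam x) (lam z) \<longleftrightarrow> lt (lam z) (lam y)" using mid_iff[OF x z y xz] by blast
    with zy o2 show False by blast
  next
    assume "lt y z"
    then have "lt (lam x) (lam y) \<longleftrightarrow> lt (lam y) (lam z)" using mid_iff[OF x y z xy] by blast
    with o1 zy lasym[OF lamX[OF y] lamX[OF z]] show False by blast
  qed
qed

lemma max1:
  assumes x: "x \<in> X" and y: "y \<in> X" and z: "z \<in> X" and yx: "lt y x" and zx: "lt z x"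
    and o1: "lt (lam y) (lam x)" and o2: "\<not> lt (lam z) (lam x)"
  shows False
proof -
  have xz: "lt (lam x) (lam z)" using dich[OF z x zx] o2 by blast
  have yz: "lt (lam y) (lam z)" using ltrans[OF lamX[OF y] lamX[OF x] lamX[OF z] o1 xz] .
  from refl_comp[OF y z yz] show False
  proof
    assume "lt y z"
    then have "lt (lam y) (lam z) \<longleftrightarrow> lt (lam z) (lam x)" using mid_iff[OF y z x _ zx] by blast
    with yz o2 show False by blast
  next
    assume "lt z y"
    then have "lt (lam z) (lam y) \<longleftrightarrow> lt (lam y) (lam x)" using mid_iff[OF z y x _ yx] by blast
    with o1 yz lasym[OF lamX[OF y] lamX[OF z]] show False by blast
  qed
qed

lemma share:
  assumes a: "a \<in> X" and b: "b \<in> X" and c: "c \<in> X" and d: "d \<in> X"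
    and ab: "lt a b" and cd: "lt c d" and sh: "a = c \<or> a = d \<or> b = c \<or> b = d"
  shows "lt (lam a) (lam b) \<longleftrightarrow> lt (lam c) (lam d)"
  using sh
proof (elim disjE)
  assume "a = c" then show ?thesis using min1[OF a b d ab] min1[OF a d b _ ab] cd by blast
next
  assume "b = d" then show ?thesis using max1[OF b a c ab] max1[OF b c a _ ab] cd by blast
next
  assume "b = c" then show ?thesis using mid_iff[OF a b d ab] cd by blast
next
  assume "a = d" then show ?thesis using mid_iff[OF c a b _ ab] cd by blast
qed

lemma path:
  "xs \<noteq> [] \<Longrightarrow> set xs \<subseteq> X \<Longrightarrow>
   (\<forall>i. Suc i < length xs \<longrightarrow> le (xs ! i) (xs ! Suc i) \<or> le (xs ! Suc i) (xs ! i)) \<Longrightarrow>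
   a \<in> X \<Longrightarrow> b \<in> X \<Longrightarrow> c \<in> X \<Longrightarrow> d \<in> X \<Longrightarrow> lt a b \<Longrightarrow> lt c d \<Longrightarrow>
   (hd xs = a \<or> hd xs = b) \<Longrightarrow> (last xs = c \<or> last xs = d) \<Longrightarrow> (lt (lam a) (lam b) \<longleftrightarrow> lt (lam c) (lam d))"
proof (induction xs arbitrary: a b)
  case Nil then show ?case by simp
next
  case (Cons u ys)
  show ?case
  proof (cases ys)
    case Nil
    then have "a = c \<or> a = d \<or> b = c \<or> b = d" using Cons.prems(10,11) by auto
    then show ?thesis by (rule share[OF Cons.prems(4-9)])
  next
    case (Cons v zs)
    have ysX: "set ys \<subseteq> X" using Cons.prems(2) by auto
    have u: "u \<in> X" and v: "v \<in> X" using Cons.prems(2) Cons by auto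
    have idx: "\<forall>i. Suc i < length ys \<longrightarrow> le (ys ! i) (ys ! Suc i) \<or> le (ys ! Suc i) (ys ! i)"
    proof (intro allI impI)
      fix i assume "Suc i < length ys"
      then have "Suc (Suc i) < length (u # ys)" by simp
      then show "le (ys ! i) (ys ! Suc i) \<or> le (ys ! Suc i) (ys ! i)"
        using Cons.prems(3) by (metis nth_Cons_Suc)
    qed
    have uv: "le u v \<or> le v u" using Cons.prems(3) spec[OF Cons.prems(3), of 0] \<open>ys = v # zs\<close> by simp
    have lastys: "last ys = c \<or> last ys = d" using Cons.prems(11) \<open>ys = v # zs\<close> by simp
    have hdys: "hd ys = v" using \<open>ys = v # zs\<close> by simp
    show ?thesis
    proof (cases "u = v")
      case True
      then show ?thesis using Cons.IH[OF _ ysX idx Cons.prems(4-9) _ lastys] Cons.prems(10) hdys \<open>ys = v # zs\<close> by auto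
    next
      case False
      obtain m n where mn: "m \<in> X" "n \<in> X" "lt m n" "(m = u \<and> n = v) \<or> (m = v \<and> n = u)"
        using uv False u v by blast
      have e1: "lt (lam a) (lam b) \<longleftrightarrow> lt (lam m) (lam n)"
        using share[OF Cons.prems(4,5) mn(1,2) Cons.prems(8) mn(3)] Cons.prems(10) mn(4) by auto
      have e2: "lt (lam m) (lam n) \<longleftrightarrow> lt (lam c) (lam d)"
        using Cons.IH[OF _ ysX idx mn(1,2) Cons.prems(6,7) mn(3) Cons.prems(9) _ lastys] hdys mn(4) \<open>ys = v # zs\<close> by auto
      show ?thesis using e1 e2 by blast
    qed
  qed
qed


lemma inv_facts:
  assumes x: "x \<in> X"
  shows "the_inv_into X lam x \<in> X" "lam (the_inv_into X lam x) = x"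
proof -
  have inj: "inj_on lam X" and im: "lam ` X = X" using bij by (auto simp: bij_betw_def)
  show "the_inv_into X lam x \<in> X" using the_inv_into_into[OF inj] x im by blast
  show "lam (the_inv_into X lam x) = x" using f_the_inv_into_f[OF inj] x im by blast
qed

lemma auto_of:
  assumes h: "\<forall>c\<in>X. \<forall>d\<in>X. lt c d \<longrightarrow> lt (lam c) (lam d)"
  shows "order_automorphism X le lam"
  unfolding order_automorphism_def
proof (intro conjI ballI impI)
  show "bij_betw lam X X" by (rule bij)
next
  fix x y assume x: "x \<in> X" and y: "y \<in> X" and l: "le x y"
  show "le (lam x) (lam y)"
  proof (cases "x = y")
    case True then show ?thesis using refl[OF lamX[OF x]] by simp
  next
    case False then show ?thesis using h x y l by blast
  qed
next
  fix x y assume x: "x \<in> X" and y: "y \<in> X" and l: "le x y"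
  define a where "a = the_inv_into X lam x"
  define b where "b = the_inv_into X lam y"
  have a: "a \<in> X" "lam a = x" using inv_facts[OF x] by (auto simp: a_def)
  have b: "b \<in> X" "lam b = y" using inv_facts[OF y] by (auto simp: b_def)
  show "le (the_inv_into X lam x) (the_inv_into X lam y)"
    unfolding a_def[symmetric] b_def[symmetric]
  proof (cases "a = b")
    case True then show "le a b" using refl[OF a(1)] by simp
  next
    case False
    then have "x \<noteq> y" using a b laminj by metis
    then have "lt (lam a) (lam b)" using a b l by simp
    from refl_comp[OF a(1) b(1) this] show "le a b"
    proof
      assume "lt b a"
      then have "lt (lam b) (lam a)" using h a b by blast
      with \<open>lt (lam a) (lam b)\<close> show "le a b" using lasym[OF lamX[OF a(1)] lamX[OF b(1)]] by blast
    qed blast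
  qed
qed

lemma anti_of:
  assumes h: "\<forall>c\<in>X. \<forall>d\<in>X. lt c d \<longrightarrow> lt (lam d) (lam c)"
  shows "order_anti_automorphism X le lam"
  unfolding order_anti_automorphism_def
proof (intro conjI ballI impI)
  show "bij_betw lam X X" by (rule bij)
next
  fix x y assume x: "x \<in> X" and y: "y \<in> X" and l: "le x y"
  show "le (lam y) (lam x)"
  proof (cases "x = y")
    case True then show ?thesis using refl[OF lamX[OF x]] by simp
  next
    case False then show ?thesis using h x y l by blast
  qed
next
  fix x y assume x: "x \<in> X" and y: "y \<in> X" and l: "le x y"
  define a where "a = the_inv_into X lam x"
  define b where "b = the_inv_into X lam y"
  have a: "a \<in> X" "lam a = x" using inv_facts[OF x] by (auto simp: a_def)
  have b: "b \<in> X" "lam b = y" using inv_facts[OF y] by (auto simp: b_def)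
  show "le (the_inv_into X lam y) (the_inv_into X lam x)"
    unfolding a_def[symmetric] b_def[symmetric]
  proof (cases "a = b")
    case True then show "le b a" using refl[OF a(1)] by simp
  next
    case False
    then have "x \<noteq> y" using a b laminj by metis
    then have "lt (lam a) (lam b)" using a b l by simp
    from refl_comp[OF a(1) b(1) this] show "le b a"
    proof
      assume "lt a b"
      then have "lt (lam b) (lam a)" using h a b by blast
      with \<open>lt (lam a) (lam b)\<close> show "le b a" using lasym[OF lamX[OF a(1)] lamX[OF b(1)]] by blast
    qed blast
  qed
qed

lemma main:
  assumes conn: "connected_poset X le"
  shows "order_automorphism X le lam \<or> order_anti_automorphism X le lam"
proof (cases "\<exists>a\<in>X. \<exists>b\<in>X. lt a b")
  case False
  then have "\<forall>c\<in>X. \<forall>d\<in>X. lt c d \<longrightarrow> lt (lam c) (lam d)" by blast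
  then show ?thesis using auto_of by blast
next
  case True
  then obtain a b where a: "a \<in> X" and b: "b \<in> X" and ab: "lt a b" by blast
  have all: "lt (lam c) (lam d) \<longleftrightarrow> lt (lam a) (lam b)" if c: "c \<in> X" and d: "d \<in> X" and cd: "lt c d" for c d
  proof -
    obtain xs where xs: "xs \<noteq> []" "hd xs = a" "last xs = c" "set xs \<subseteq> X"
      "\<forall>i. Suc i < length xs \<longrightarrow> le (xs ! i) (xs ! Suc i) \<or> le (xs ! Suc i) (xs ! i)"
      using conn a c unfolding connected_poset_def by blast
    have "lt (lam a) (lam b) \<longleftrightarrow> lt (lam c) (lam d)"
      by (rule path[OF xs(1) xs(4) xs(5) a b c d ab cd]) (use xs in auto)
    then show ?thesis by blast
  qed
  show ?thesis
  proof (cases "lt (lam a) (lam b)")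
    case True
    then have "\<forall>c\<in>X. \<forall>d\<in>X. lt c d \<longrightarrow> lt (lam c) (lam d)" using all by blast
    then show ?thesis using auto_of by blast
  next
    case False
    have "\<forall>c\<in>X. \<forall>d\<in>X. lt c d \<longrightarrow> lt (lam d) (lam c)"
    proof (intro ballI impI)
      fix c d assume c: "c \<in> X" and d: "d \<in> X" and cd: "lt c d"
      have "\<not> lt (lam c) (lam d)" using all[OF c d cd] False by blast
      then show "lt (lam d) (lam c)" using comp[OF c d cd] by blast
    qed
    then show ?thesis using anti_of by blast
  qed
qed

end

theorem lemma4p2:
  fixes X :: "'a set" and le :: "'a \<Rightarrow> 'a \<Rightarrow> bool"
    and \<phi> :: "('a \<Rightarrow> 'a \<Rightarrow> 'f::field) \<Rightarrow> ('a \<Rightarrow> 'a \<Rightarrow> 'f)"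
    and lam :: "'a \<Rightarrow> 'a"
  assumes "finite X" and "poset_on X le" and "connected_poset X le"
    and "jordan_automorphism X le \<phi>"
    and "bij_betw lam X X"
    and "\<forall>x\<in>X. \<phi> (e_unit x x) = e_unit (lam x) (lam x)"
  shows "order_automorphism X le lam \<or> order_anti_automorphism X le lam"
proof -
  interpret JA X le \<phi> lam using assms by (unfold_locales) auto
  show ?thesis using main[OF assms(3)] .
qed

end
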